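(* Let $\Sigma_1$, $\Sigma_2$ be real, symmetric, positive definite $d\times d$ matrices and let $\varepsilon>0$. Then the unique symmetric, positive definite solution $X$ of the matrix equation $$X\Sigma_1X+\tfrac{\varepsilon}{2}X=\Sigma_2$$ is $$X_\varepsilon=\Sigma_1^{-1/2}\big(\Sigma_1^{1/2}\Sigma_2\Sigma_1^{1/2}+(\tfrac{\varepsilon}{4})^2 I_d\big)^{1/2}\Sigma_1^{-1/2}-\tfrac{\varepsilon}{4}\Sigma_1^{-1}.$$ Furthermore, the $2d\times 2d$ matrix $$\Sigma_\varepsilon=\begin{bmatrix}\Sigma_1 & \Sigma_1X_\varepsilon\\ X_\varepsilon\Sigma_1 & \Sigma_2\end{bmatrix}$$ is real, symmetric and positive definite, and $$\Sigma_\varepsilon^{-1}=\begin{bmatrix}\Sigma_1^{-1}+\frac{2}{\varepsilon}X_\varepsilon & -\frac{2}{\varepsilon}I_d\\ -\frac{2}{\varepsilon}I_d & \frac{2}{\varepsilon}X_\varepsilon^{-1}\end{bmatrix}.$$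
   Context: $A^{1/2}$ denotes the unique symmetric positive definite square root of a symmetric positive definite matrix $A$; $I_d$ is the $d\times d$ identity matrix. *)

theory Defs
  imports "HOL-Analysis.Analysis"
begin

definition sym_matrix :: "real^'n^'n \<Rightarrow> bool" where
  "sym_matrix A \<longleftrightarrow> transpose A = A"

definition pos_def :: "real^'n^'n \<Rightarrow> bool" where
  "pos_def A \<longleftrightarrow> sym_matrix A \<and> (\<forall>x. x \<noteq> 0 \<longrightarrow> x \<bullet> (A *v x) > 0)"

definition mat_sqrt :: "real^'n^'n \<Rightarrow> real^'n^'n" where
  "mat_sqrt A = (THE B. pos_def B \<and> B ** B = A)"

definition block_mat ::
  "real^'n^'n \<Rightarrow> real^'n^'n \<Rightarrow> real^'n^'n \<Rightarrow> real^'n^'n \<Rightarrow> real^('n + 'n)^('n + 'n)" where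
  "block_mat A B C D = (\<chi> i j. case i of
      Inl i' \<Rightarrow> (case j of Inl j' \<Rightarrow> A $ i' $ j' | Inr j' \<Rightarrow> B $ i' $ j')
    | Inr i' \<Rightarrow> (case j of Inl j' \<Rightarrow> C $ i' $ j' | Inr j' \<Rightarrow> D $ i' $ j'))"

end

theory Submission
  imports Defs
begin

lemma sym_inner:
  assumes "sym_matrix A" shows "x \<bullet> (A *v y) = (A *v x) \<bullet> y"
proof -
  have "x \<bullet> (A *v y) = (x v* A) \<bullet> y" by (simp add: dot_lmul_matrix)
  also have "x v* A = transpose A *v x" by simp
  also have "\<dots> = A *v x" using assms by (simp add: sym_matrix_def)
  finally show ?thesis .
qed

lemma sym_matrixI:
  assumes "\<And>x y. x \<bullet> (A *v y) = (A *v x) \<bullet> y" shows "sym_matrix A"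
proof -
  have "transpose A *v x = A *v x" for x
  proof -
    have "(transpose A *v x) \<bullet> z = (A *v x) \<bullet> z" for z
    proof -
      have "(transpose A *v x) \<bullet> z = (x v* A) \<bullet> z" by simp
      also have "\<dots> = x \<bullet> (A *v z)" by (rule dot_lmul_matrix)
      also have "\<dots> = (A *v x) \<bullet> z" by (rule assms)
      finally show ?thesis .
    qed
    thus ?thesis using vector_eq_rdot by blast
  qed
  thus ?thesis unfolding sym_matrix_def matrix_eq by blast
qed

lemma quad_le_scaled:
  fixes A :: "real^'n^'n"
  assumes S: "subspace S" and v: "v \<in> S" "norm v = 1"
    and mx: "\<forall>u\<in>S. norm u = 1 \<longrightarrow> u \<bullet> (A *v u) \<le> v \<bullet> (A *v v)"
    and u: "u \<in> S"
  shows "u \<bullet> (A *v u) \<le> (v \<bullet> (A *v v)) * (u \<bullet> u)"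
proof (cases "u = 0")
  case True then show ?thesis by simp
next
  case False
  let ?n = "norm u"
  have n: "?n > 0" using False by simp
  have "(u /\<^sub>R ?n) \<in> S" using S u by (simp add: subspace_scale)
  moreover have "norm (u /\<^sub>R ?n) = 1" using n by simp
  ultimately have "(u /\<^sub>R ?n) \<bullet> (A *v (u /\<^sub>R ?n)) \<le> v \<bullet> (A *v v)" using mx by blast
  moreover have "u \<bullet> (A *v u) = ?n^2 * ((u /\<^sub>R ?n) \<bullet> (A *v (u /\<^sub>R ?n)))"
    using n by (simp add: matrix_vector_mult_scaleR power2_eq_square field_simps)
  ultimately have "u \<bullet> (A *v u) \<le> ?n^2 * (v \<bullet> (A *v v))"
    using n by (metis mult_left_mono zero_le_power2)
  hence "u \<bullet> (A *v u) \<le> (v \<bullet> (A *v v)) * ?n^2" by (simp add: mult.commute)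
  then show ?thesis by (simp add: power2_norm_eq_inner)
qed

lemma max_eig:
  fixes A :: "real^'n^'n"
  assumes sym: "sym_matrix A" and S: "subspace S" and inv: "\<forall>x\<in>S. A *v x \<in> S"
    and v: "v \<in> S" "norm v = 1"
    and mx: "\<forall>u\<in>S. norm u = 1 \<longrightarrow> u \<bullet> (A *v u) \<le> v \<bullet> (A *v v)"
  shows "A *v v = (v \<bullet> (A *v v)) *\<^sub>R v"
proof -
  define l where "l = v \<bullet> (A *v v)"
  define w where "w = A *v v - l *\<^sub>R v"
  have vv: "v \<bullet> v = 1" using v by (simp add: norm_eq_1)
  have wS: "w \<in> S" unfolding w_def using S inv v by (simp add: subspace_diff subspace_scale)
  have wv: "v \<bullet> w = 0" unfolding w_def l_def by (simp add: inner_diff_right vv)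
  have wAv: "w \<bullet> (A *v v) = w \<bullet> w"
    unfolding w_def by (simp add: inner_diff_left inner_diff_right l_def inner_commute vv)
  have vAw: "v \<bullet> (A *v w) = w \<bullet> w"
    using sym_inner[OF sym, of v w] wAv by (simp add: inner_commute)
  define q where "q = w \<bullet> (A *v w)"
  define K where "K = l * (w \<bullet> w) - q"
  have key: "2 * t * (w \<bullet> w) \<le> t^2 * K" for t
  proof -
    have uS: "v + t *\<^sub>R w \<in> S" using S v wS by (simp add: subspace_add subspace_scale)
    have "(v + t *\<^sub>R w) \<bullet> (A *v (v + t *\<^sub>R w)) \<le> l * ((v + t *\<^sub>R w) \<bullet> (v + t *\<^sub>R w))"
      using quad_le_scaled[OF S v mx uS] by (simp add: l_def)
    moreover have "(v + t *\<^sub>R w) \<bullet> (A *v (v + t *\<^sub>R w)) = l + 2 * t * (w \<bullet> w) + t^2 * q"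
      by (simp add: matrix_vector_right_distrib matrix_vector_mult_scaleR inner_add_left
          inner_add_right wAv vAw l_def q_def power2_eq_square algebra_simps)
    moreover have "(v + t *\<^sub>R w) \<bullet> (v + t *\<^sub>R w) = 1 + t^2 * (w \<bullet> w)"
      by (simp add: inner_add_left inner_add_right vv wv inner_commute power2_eq_square)
    ultimately have "l + 2 * t * (w \<bullet> w) + t^2 * q \<le> l * (1 + t^2 * (w \<bullet> w))"
      by simp
    moreover have "t^2 * K = l * (t^2 * (w \<bullet> w)) - t^2 * q"
      unfolding K_def by (simp add: right_diff_distrib)
    ultimately show ?thesis by (simp add: distrib_left)
  qed
  have "w \<bullet> w = 0"
  proof (rule ccontr)
    assume "w \<bullet> w \<noteq> 0"
    hence p: "w \<bullet> w > 0" by (simp add: order_le_neq_trans)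
    define t where "t = (w \<bullet> w) / (\<bar>K\<bar> + 1)"
    have t: "t > 0" unfolding t_def using p by simp
    have "t^2 * K \<le> t^2 * \<bar>K\<bar>" by (rule mult_left_mono) simp_all
    hence "t * (2 * (w \<bullet> w)) \<le> t * (t * \<bar>K\<bar>)"
      using key[of t] by (simp add: power2_eq_square mult.assoc mult.left_commute)
    hence "2 * (w \<bullet> w) \<le> t * \<bar>K\<bar>" using t by simp
    also have "t * \<bar>K\<bar> < w \<bullet> w" unfolding t_def using p
      by (simp add: field_simps)
    finally show False using p by simp
  qed
  hence "w = 0" by simp
  thus ?thesis unfolding w_def l_def by simp
qed


lemma eig_basis_sub:
  fixes A :: "real^'n^'n"
  assumes sym: "sym_matrix A"
  shows "subspace S \<Longrightarrow> (\<forall>x\<in>S. A *v x \<in> S) \<Longrightarrow>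
    \<exists>B. B \<subseteq> S \<and> finite B \<and> pairwise orthogonal B \<and>
        (\<forall>b\<in>B. norm b = 1 \<and> A *v b = (b \<bullet> (A *v b)) *\<^sub>R b) \<and> S \<subseteq> span B"
proof (induction "dim S" arbitrary: S rule: less_induct)
  case less
  show ?case
  proof (cases "S \<subseteq> {0}")
    case True then show ?thesis by (intro exI[of _ "{}"]) auto
  next
    case False
    then obtain x where x: "x \<in> S" "x \<noteq> 0" by auto
    let ?K = "S \<inter> sphere 0 1"
    have "x /\<^sub>R norm x \<in> ?K" using x less.prems(1) by (simp add: subspace_scale)
    hence ne: "?K \<noteq> {}" by blast
    have cK: "compact ?K"
      by (intro closed_Int_compact closed_subspace less.prems(1) compact_sphere)
    have cont: "continuous_on ?K (\<lambda>u. u \<bullet> (A *v u))" by (intro continuous_intros)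
    obtain v where vK: "v \<in> ?K" and vmax: "\<forall>u\<in>?K. u \<bullet> (A *v u) \<le> v \<bullet> (A *v v)"
      using continuous_attains_sup[OF cK ne cont] by blast
    have vS: "v \<in> S" and nv: "norm v = 1" using vK by auto
    have ev: "A *v v = (v \<bullet> (A *v v)) *\<^sub>R v"
      by (rule max_eig[OF sym less.prems(1) less.prems(2) vS nv]) (use vmax in auto)
    define S' where "S' = {y \<in> S. v \<bullet> y = 0}"
    have sub': "subspace S'"
      using less.prems(1) unfolding S'_def subspace_def by (auto simp: inner_add_right)
    have inv': "\<forall>y\<in>S'. A *v y \<in> S'"
    proof
      fix y assume y: "y \<in> S'"
      have "v \<bullet> (A *v y) = (A *v v) \<bullet> y" by (rule sym_inner[OF sym])
      also have "\<dots> = 0" using y ev unfolding S'_def by (metis (mono_tags, lifting) inner_scaleR_left mem_Collect_eq mult_zero_right)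
      finally show "A *v y \<in> S'" using y less.prems(2) unfolding S'_def by auto
    qed
    have vv: "v \<bullet> v = 1" using nv by (simp add: norm_eq_1)
    have "S' \<subseteq> S" unfolding S'_def by auto
    moreover have "v \<notin> S'" unfolding S'_def using vv by simp
    ultimately have ps: "S' \<subset> S" using vS by blast
    have e1: "span S' = S'" using sub' by (rule span_eq_iff[THEN iffD2])
    have e2: "span S = S" using less.prems(1) by (rule span_eq_iff[THEN iffD2])
    have "span S' \<subset> span S" unfolding e1 e2 by (rule ps)
    hence "dim S' < dim S" by (rule dim_psubset)
    then obtain B' where B': "B' \<subseteq> S'" "finite B'" "pairwise orthogonal B'"
      "\<forall>b\<in>B'. norm b = 1 \<and> A *v b = (b \<bullet> (A *v b)) *\<^sub>R b" "S' \<subseteq> span B'"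
      using less.hyps[OF _ sub' inv'] by blast
    have vB': "v \<notin> B'" using B'(1) vv unfolding S'_def by auto
    have orth: "orthogonal v b" "orthogonal b v" if "b \<in> B'" for b
      using that B'(1) unfolding S'_def orthogonal_def by (auto simp: inner_commute)
    show ?thesis
    proof (intro exI[of _ "insert v B'"] conjI)
      show "insert v B' \<subseteq> S" using vS B'(1) unfolding S'_def by auto
      show "finite (insert v B')" using B'(2) by simp
      show "pairwise orthogonal (insert v B')"
        using B'(3) orth vB' by (auto simp: pairwise_insert)
      show "\<forall>b\<in>insert v B'. norm b = 1 \<and> A *v b = (b \<bullet> (A *v b)) *\<^sub>R b"
        using B'(4) nv ev by auto
      show "S \<subseteq> span (insert v B')"
      proof
        fix y assume y: "y \<in> S"
        have "y - (v \<bullet> y) *\<^sub>R v \<in> S'"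
          using y vS less.prems(1) vv unfolding S'_def
          by (simp add: subspace_diff subspace_scale inner_diff_right)
        hence "y - (v \<bullet> y) *\<^sub>R v \<in> span (insert v B')"
          using B'(5) span_mono[of B' "insert v B'"] by auto
        moreover have "(v \<bullet> y) *\<^sub>R v \<in> span (insert v B')"
          by (simp add: span_base span_mul)
        ultimately have "(y - (v \<bullet> y) *\<^sub>R v) + (v \<bullet> y) *\<^sub>R v \<in> span (insert v B')"
          by (rule span_add)
        thus "y \<in> span (insert v B')" by simp
      qed
    qed
  qed
qed

lemma eig_basis:
  fixes A :: "real^'n^'n"
  assumes sym: "sym_matrix A"
  obtains B where "finite B" "pairwise orthogonal B"
    "\<And>b. b \<in> B \<Longrightarrow> norm b = 1" "\<And>b. b \<in> B \<Longrightarrow> A *v b = (b \<bullet> (A *v b)) *\<^sub>R b"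
    "\<And>x. x = (\<Sum>b\<in>B. (x \<bullet> b) *\<^sub>R b)"
proof -
  obtain B where B: "finite B" "pairwise orthogonal B"
      "\<forall>b\<in>B. norm b = 1 \<and> A *v b = (b \<bullet> (A *v b)) *\<^sub>R b" "UNIV \<subseteq> span B"
    using eig_basis_sub[OF sym, of UNIV] by auto
  have "x = (\<Sum>b\<in>B. (x \<bullet> b) *\<^sub>R b)" for x
  proof -
    have "x \<in> span B" using B(4) by auto
    hence "(\<Sum>b\<in>B. (x \<bullet> b) *\<^sub>R b) = x"
      using orthonormal_basis_expand[OF B(2) _ _ B(1), of x] B(3) by auto
    thus ?thesis by simp
  qed
  thus ?thesis using that B by blast
qed


lemma inv_mat:
  fixes A :: "real^'n^'n"
  assumes "invertible A"
  shows "A ** matrix_inv A = mat 1" "matrix_inv A ** A = mat 1"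
proof -
  have "\<exists>A'. A ** A' = mat 1 \<and> A' ** A = mat 1" using assms unfolding invertible_def by blast
  hence "A ** matrix_inv A = mat 1 \<and> matrix_inv A ** A = mat 1"
    unfolding matrix_inv_def by (rule someI_ex)
  thus "A ** matrix_inv A = mat 1" "matrix_inv A ** A = mat 1" by auto
qed

lemma inv_unique:
  fixes A B :: "real^'n^'n"
  assumes "A ** B = mat 1"
  shows "invertible A" "matrix_inv A = B"
proof -
  have BA: "B ** A = mat 1" using assms matrix_left_right_inverse by blast
  show inv: "invertible A" unfolding invertible_def using assms BA by blast
  have "matrix_inv A = matrix_inv A ** (A ** B)" using assms by simp
  also have "\<dots> = (matrix_inv A ** A) ** B" by (simp add: matrix_mul_assoc)
  also have "\<dots> = B" using inv_mat(2)[OF inv] by simp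
  finally show "matrix_inv A = B" .
qed

lemma pos_def_invertible:
  fixes A :: "real^'n^'n"
  assumes "pos_def A" shows "invertible A"
proof -
  have "\<forall>x. A *v x = 0 \<longrightarrow> x = 0"
  proof (intro allI impI)
    fix x assume "A *v x = 0"
    hence "x \<bullet> (A *v x) = 0" by simp
    thus "x = 0" using assms unfolding pos_def_def by (metis less_irrefl)
  qed
  hence "\<exists>B. B ** A = mat 1" using matrix_left_invertible_ker by blast
  thus ?thesis using invertible_left_inverse by blast
qed

lemma onb_coeff:
  fixes B :: "'a::real_inner set"
  assumes "finite B" "pairwise orthogonal B" "\<And>b. b \<in> B \<Longrightarrow> norm b = 1" "b' \<in> B"
  shows "(\<Sum>b\<in>B. c b *\<^sub>R b) \<bullet> b' = c b'"
proof -
  have "(\<Sum>b\<in>B. c b *\<^sub>R b) \<bullet> b' = (\<Sum>b\<in>B. c b * (b \<bullet> b'))" by (simp add: inner_sum_left)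
  also have "\<dots> = c b' * (b' \<bullet> b') + (\<Sum>b\<in>B - {b'}. c b * (b \<bullet> b'))"
    using assms(1,4) by (simp add: sum.remove)
  also have "(\<Sum>b\<in>B - {b'}. c b * (b \<bullet> b')) = 0"
    using assms(2,4) by (intro sum.neutral) (auto simp: pairwise_def orthogonal_def)
  also have "b' \<bullet> b' = 1" using assms(3)[OF assms(4)] by (simp add: norm_eq_1)
  finally show ?thesis by simp
qed

lemma pos_sum:
  fixes B :: "'a::real_inner set"
  assumes "finite B" "x = (\<Sum>b\<in>B. (x \<bullet> b) *\<^sub>R b)" "\<And>b. b \<in> B \<Longrightarrow> c b > 0" "x \<noteq> 0"
  shows "(\<Sum>b\<in>B. c b * (x \<bullet> b)^2) > 0"
proof -
  obtain b where b: "b \<in> B" "x \<bullet> b \<noteq> 0"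
  proof (rule ccontr)
    assume "\<not> thesis"
    hence "\<forall>b\<in>B. x \<bullet> b = 0" using that by blast
    hence "(\<Sum>b\<in>B. (x \<bullet> b) *\<^sub>R b) = 0" by (intro sum.neutral) simp
    hence "x = 0" by (rule trans[OF assms(2)])
    thus False using assms(4) by simp
  qed
  show ?thesis
  proof (rule sum_pos2[OF assms(1) b(1)])
    show "0 < c b * (x \<bullet> b)^2" using b assms(3) by simp
    fix i assume "i \<in> B"
    hence "c i > 0" by (rule assms(3))
    thus "0 \<le> c i * (x \<bullet> i)^2" by simp
  qed
qed

lemma eig_expand:
  fixes A :: "real^'n^'n"
  assumes "\<And>b. b \<in> B \<Longrightarrow> A *v b = (b \<bullet> (A *v b)) *\<^sub>R b" "x = (\<Sum>b\<in>B. (x \<bullet> b) *\<^sub>R b)"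
  shows "A *v x = (\<Sum>b\<in>B. ((x \<bullet> b) * (b \<bullet> (A *v b))) *\<^sub>R b)"
proof -
  have "A *v x = A *v (\<Sum>b\<in>B. (x \<bullet> b) *\<^sub>R b)" by (rule arg_cong[OF assms(2)])
  also have "\<dots> = (\<Sum>b\<in>B. (x \<bullet> b) *\<^sub>R (A *v b))"
    by (simp add: vec.sum matrix_vector_mult_scaleR)
  also have "\<dots> = (\<Sum>b\<in>B. ((x \<bullet> b) * (b \<bullet> (A *v b))) *\<^sub>R b)"
  proof (intro sum.cong refl)
    fix b assume b: "b \<in> B"
    define c where "c = b \<bullet> (A *v b)"
    have h: "A *v b = c *\<^sub>R b" unfolding c_def by (rule assms(1)[OF b])
    have "(x \<bullet> b) *\<^sub>R (A *v b) = ((x \<bullet> b) * c) *\<^sub>R b" unfolding h by simp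
    thus "(x \<bullet> b) *\<^sub>R (A *v b) = ((x \<bullet> b) * (b \<bullet> (A *v b))) *\<^sub>R b"
      unfolding c_def .
  qed
  finally show ?thesis .
qed

lemma eig_pos_def:
  fixes M :: "real^'n^'n"
  assumes sym: "sym_matrix M"
    and ev: "\<And>v \<mu>. v \<noteq> 0 \<Longrightarrow> M *v v = \<mu> *\<^sub>R v \<Longrightarrow> \<mu> > 0"
  shows "pos_def M"
proof -
  obtain B where B: "finite B" "pairwise orthogonal B"
    "\<And>b. b \<in> B \<Longrightarrow> norm b = 1" "\<And>b. b \<in> B \<Longrightarrow> M *v b = (b \<bullet> (M *v b)) *\<^sub>R b"
    "\<And>x. x = (\<Sum>b\<in>B. (x \<bullet> b) *\<^sub>R b)"
    using eig_basis[OF sym] by blast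
  have "x \<bullet> (M *v x) > 0" if x: "x \<noteq> 0" for x
  proof -
    have e: "M *v x = (\<Sum>b\<in>B. ((x \<bullet> b) * (b \<bullet> (M *v b))) *\<^sub>R b)"
      by (rule eig_expand[OF B(4) B(5)])
    have "x \<bullet> (M *v x) = (\<Sum>b\<in>B. (b \<bullet> (M *v b)) * (x \<bullet> b)^2)"
      unfolding e by (simp add: inner_sum_right power2_eq_square mult_ac)
    also have "\<dots> > 0"
    proof (rule pos_sum[OF B(1) B(5) _ x])
      fix b assume b: "b \<in> B"
      have "b \<noteq> 0" using B(3)[OF b] by auto
      thus "b \<bullet> (M *v b) > 0" using ev B(4)[OF b] by blast
    qed
    finally show ?thesis .
  qed
  thus ?thesis using sym unfolding pos_def_def by blast
qed

lemma eig_zero: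
  fixes M :: "real^'n^'n"
  assumes sym: "sym_matrix M"
    and ev: "\<And>v \<mu>. v \<noteq> 0 \<Longrightarrow> M *v v = \<mu> *\<^sub>R v \<Longrightarrow> \<mu> = 0"
  shows "M = 0"
proof -
  obtain B where B: "finite B" "pairwise orthogonal B"
    "\<And>b. b \<in> B \<Longrightarrow> norm b = 1" "\<And>b. b \<in> B \<Longrightarrow> M *v b = (b \<bullet> (M *v b)) *\<^sub>R b"
    "\<And>x. x = (\<Sum>b\<in>B. (x \<bullet> b) *\<^sub>R b)"
    using eig_basis[OF sym] by blast
  have z: "b \<bullet> (M *v b) = 0" if b: "b \<in> B" for b
  proof -
    have "b \<noteq> 0" using B(3)[OF b] by auto
    thus ?thesis using ev B(4)[OF b] by blast
  qed
  have "M *v x = 0 *v x" for x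
  proof -
    have e: "M *v x = (\<Sum>b\<in>B. ((x \<bullet> b) * (b \<bullet> (M *v b))) *\<^sub>R b)"
      by (rule eig_expand[OF B(4) B(5)])
    show ?thesis unfolding e using z by simp
  qed
  thus ?thesis unfolding matrix_eq by blast
qed


lemma outer_mv: "(\<chi> i j. b$i * b$j) *v x = (b \<bullet> x) *\<^sub>R (b::real^'n)"
  by (simp add: vec_eq_iff matrix_vector_mult_def inner_vec_def sum_distrib_left mult_ac)

lemma sum_mv:
  fixes f :: "'a \<Rightarrow> real^'n^'m"
  assumes "finite B" shows "(\<Sum>b\<in>B. f b) *v x = (\<Sum>b\<in>B. f b *v x)"
  using assms by (induction B rule: finite_induct) (simp_all add: matrix_vector_mult_add_rdistrib)

lemma sqrt_exists:
  fixes A :: "real^'n^'n"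
  assumes A: "pos_def A"
  shows "\<exists>R. pos_def R \<and> R ** R = A"
proof -
  have sym: "sym_matrix A" using A by (simp add: pos_def_def)
  obtain B where B: "finite B" "pairwise orthogonal B"
    "\<And>b. b \<in> B \<Longrightarrow> norm b = 1" "\<And>b. b \<in> B \<Longrightarrow> A *v b = (b \<bullet> (A *v b)) *\<^sub>R b"
    "\<And>x. x = (\<Sum>b\<in>B. (x \<bullet> b) *\<^sub>R b)"
    using eig_basis[OF sym] by blast
  define l where "l b = b \<bullet> (A *v b)" for b
  have lpos: "l b > 0" if b: "b \<in> B" for b
  proof -
    have "b \<noteq> 0" using B(3)[OF b] by auto
    thus ?thesis using A unfolding pos_def_def l_def by blast
  qed
  define R where "R = (\<Sum>b\<in>B. sqrt (l b) *\<^sub>R (\<chi> i j. b$i * b$j))"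
  have Rx: "R *v x = (\<Sum>b\<in>B. (sqrt (l b) * (b \<bullet> x)) *\<^sub>R b)" for x
    unfolding R_def sum_mv[OF B(1)]
    by (simp add: scaleR_matrix_vector_assoc[symmetric] outer_mv)
  have symR: "sym_matrix R"
    by (rule sym_matrixI) (simp add: Rx inner_sum_left inner_sum_right inner_commute mult_ac)
  have "x \<bullet> (R *v x) > 0" if x: "x \<noteq> 0" for x
  proof -
    have "x \<bullet> (R *v x) = (\<Sum>b\<in>B. sqrt (l b) * (x \<bullet> b)^2)"
      by (simp add: Rx inner_sum_right inner_commute power2_eq_square mult_ac)
    also have "\<dots> > 0"
      by (rule pos_sum[OF B(1) B(5) _ x]) (simp add: lpos)
    finally show ?thesis .
  qed
  hence pR: "pos_def R" using symR unfolding pos_def_def by blast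
  have "(R ** R) *v x = A *v x" for x
  proof -
    have c: "b \<bullet> (R *v x) = sqrt (l b) * (b \<bullet> x)" if b: "b \<in> B" for b
    proof -
      have "b \<bullet> (R *v x) = (R *v x) \<bullet> b" by (rule inner_commute)
      also have "\<dots> = sqrt (l b) * (b \<bullet> x)" unfolding Rx
        by (rule onb_coeff[where c="\<lambda>b. sqrt (l b) * (b \<bullet> x)", OF B(1) B(2) B(3) b])
      finally show ?thesis .
    qed
    have "(R ** R) *v x = R *v (R *v x)" by (simp add: matrix_vector_mul_assoc)
    also have "\<dots> = (\<Sum>b\<in>B. (sqrt (l b) * (b \<bullet> (R *v x))) *\<^sub>R b)" by (rule Rx)
    also have "\<dots> = (\<Sum>b\<in>B. ((x \<bullet> b) * (b \<bullet> (A *v b))) *\<^sub>R b)"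
    proof (intro sum.cong refl)
      fix b assume b: "b \<in> B"
      have "sqrt (l b) * (b \<bullet> (R *v x)) = l b * (b \<bullet> x)"
        using c[OF b] lpos[OF b] by (simp add: mult.assoc[symmetric])
      thus "(sqrt (l b) * (b \<bullet> (R *v x))) *\<^sub>R b = ((x \<bullet> b) * (b \<bullet> (A *v b))) *\<^sub>R b"
        by (simp add: l_def inner_commute mult.commute)
    qed
    also have "\<dots> = A *v x" by (rule eig_expand[OF B(4) B(5), symmetric])
    finally show ?thesis .
  qed
  hence "R ** R = A" unfolding matrix_eq by blast
  thus ?thesis using pR by blast
qed

lemma sqrt_unique:
  fixes P Q :: "real^'n^'n"
  assumes P: "pos_def P" and Q: "pos_def Q" and PQ: "P ** P = Q ** Q"
  shows "P = Q"
proof -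
  have sP: "sym_matrix P" and sQ: "sym_matrix Q" using P Q by (auto simp: pos_def_def)
  define D where "D = P - Q"
  have Dv: "D *v x = P *v x - Q *v x" for x unfolding D_def by (simp add: matrix_vector_mult_diff_rdistrib)
  have sD: "sym_matrix D"
    by (rule sym_matrixI) (simp add: Dv inner_diff_left inner_diff_right sym_inner[OF sP] sym_inner[OF sQ])
  have "\<mu> = 0" if v: "v \<noteq> 0" and ev: "D *v v = \<mu> *\<^sub>R v" for v \<mu>
  proof -
    have PP: "P *v (P *v v) = Q *v (Q *v v)" using PQ by (simp add: matrix_vector_mul_assoc)
    have "P *v (D *v v) + D *v (Q *v v) = 0"
      by (simp add: Dv matrix_vector_mult_diff_distrib PP)
    hence "v \<bullet> (P *v (D *v v)) + v \<bullet> (D *v (Q *v v)) = 0"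
      by (metis inner_add_right inner_zero_right)
    moreover have "v \<bullet> (D *v (Q *v v)) = \<mu> * (v \<bullet> (Q *v v))"
      using sym_inner[OF sD, of v "Q *v v"] ev by simp
    moreover have "v \<bullet> (P *v (D *v v)) = \<mu> * (v \<bullet> (P *v v))"
      using ev by (simp add: matrix_vector_mult_scaleR)
    ultimately have "\<mu> * (v \<bullet> (P *v v) + v \<bullet> (Q *v v)) = 0" by (simp add: distrib_left)
    moreover have "v \<bullet> (P *v v) > 0" "v \<bullet> (Q *v v) > 0" using P Q v by (auto simp: pos_def_def)
    ultimately show ?thesis by simp
  qed
  hence "D = 0" by (intro eig_zero[OF sD]) blast
  thus ?thesis unfolding D_def by simp
qed

lemma mat_sqrt:
  fixes A :: "real^'n^'n"
  assumes "pos_def A"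
  shows "pos_def (mat_sqrt A)" "mat_sqrt A ** mat_sqrt A = A"
proof -
  have "\<exists>!R. pos_def R \<and> R ** R = A"
    using sqrt_exists[OF assms] sqrt_unique by metis
  hence "pos_def (mat_sqrt A) \<and> mat_sqrt A ** mat_sqrt A = A"
    unfolding mat_sqrt_def by (rule theI')
  thus "pos_def (mat_sqrt A)" "mat_sqrt A ** mat_sqrt A = A" by auto
qed

lemma mat_sqrt_unique:
  fixes A R :: "real^'n^'n"
  assumes "pos_def A" "pos_def R" "R ** R = A"
  shows "mat_sqrt A = R"
  using sqrt_unique mat_sqrt[OF assms(1)] assms(2,3) by metis


lemma mm_add_r: "((A::real^'n^'m) + B) ** C = A ** C + B ** C"
  by (simp add: matrix_matrix_mult_def vec_eq_iff sum.distrib algebra_simps)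
lemma mm_diff_l: "(A::real^'n^'m) ** (B - C) = A ** B - A ** C"
  by (simp add: matrix_matrix_mult_def vec_eq_iff sum_subtractf algebra_simps)
lemma mm_diff_r: "((A::real^'n^'m) - B) ** C = A ** C - B ** C"
  by (simp add: matrix_matrix_mult_def vec_eq_iff sum_subtractf algebra_simps)
lemma mm_scale_l: "(k *\<^sub>R (A::real^'n^'m)) ** B = k *\<^sub>R (A ** B)"
  by (simp add: scalar_matrix_assoc)
lemma mm_scale_r: "(A::real^'n^'m) ** (k *\<^sub>R B) = k *\<^sub>R (A ** B)"
  by (simp add: matrix_scalar_ac scalar_matrix_assoc)
lemma mm_neg_l: "(- (A::real^'n^'m)) ** B = - (A ** B)"
  by (simp add: matrix_matrix_mult_def vec_eq_iff sum_negf)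
lemma mm_neg_r: "(A::real^'n^'m) ** (- B) = - (A ** B)"
  by (simp add: matrix_matrix_mult_def vec_eq_iff sum_negf)

lemmas mm_simps = matrix_add_ldistrib mm_add_r mm_diff_l mm_diff_r mm_scale_l mm_scale_r
  mm_neg_l mm_neg_r matrix_mul_assoc matrix_mul_lid matrix_mul_rid

definition blk_l :: "real^('n + 'n) \<Rightarrow> real^'n" where "blk_l z = (\<chi> i. z $ Inl i)"
definition blk_r :: "real^('n + 'n) \<Rightarrow> real^'n" where "blk_r z = (\<chi> i. z $ Inr i)"

lemma sum_UNIV_plus: "(\<Sum>k\<in>(UNIV::('a::finite + 'b::finite) set). f k) =
   (\<Sum>i\<in>UNIV. f (Inl i)) + (\<Sum>i\<in>UNIV. f (Inr i))"
proof -
  have "sum f (UNIV <+> UNIV) = sum (f \<circ> Inl) UNIV + sum (f \<circ> Inr) UNIV"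
    by (rule sum.Plus) simp_all
  thus ?thesis by (simp add: comp_def)
qed

lemma blk_inner: "z \<bullet> w = blk_l z \<bullet> blk_l w + blk_r z \<bullet> blk_r w"
  by (simp add: inner_vec_def blk_l_def blk_r_def sum_UNIV_plus)

lemma blk_mv_l: "blk_l (block_mat A B C D *v z) = A *v blk_l z + B *v blk_r z"
  by (simp add: blk_l_def blk_r_def block_mat_def matrix_vector_mult_def vec_eq_iff sum_UNIV_plus)

lemma blk_mv_r: "blk_r (block_mat A B C D *v z) = C *v blk_l z + D *v blk_r z"
  by (simp add: blk_l_def blk_r_def block_mat_def matrix_vector_mult_def vec_eq_iff sum_UNIV_plus)

lemma blk_zero: "z = 0 \<longleftrightarrow> blk_l z = 0 \<and> blk_r z = 0"
proof
  assume "blk_l z = 0 \<and> blk_r z = 0"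
  hence "z $ k = 0" for k
    by (cases k) (auto simp: blk_l_def blk_r_def vec_eq_iff)
  thus "z = 0" by (simp add: vec_eq_iff)
qed (simp add: blk_l_def blk_r_def vec_eq_iff)

lemma block_transpose:
  "transpose (block_mat A B C D) = block_mat (transpose A) (transpose C) (transpose B) (transpose D)"
  by (simp add: block_mat_def transpose_def vec_eq_iff split: sum.split)

lemma block_mult:
  "block_mat A B C D ** block_mat E F G H =
   block_mat (A ** E + B ** G) (A ** F + B ** H) (C ** E + D ** G) (C ** F + D ** H)"
  by (simp add: block_mat_def matrix_matrix_mult_def vec_eq_iff sum_UNIV_plus split: sum.split)

lemma block_id: "block_mat (mat 1) 0 0 (mat 1) = (mat 1 :: real^('n::finite+'n)^('n+'n))"
  by (simp add: block_mat_def mat_def vec_eq_iff split: sum.split)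


lemma sym_inv:
  fixes R :: "real^'n^'n"
  assumes "sym_matrix R" "invertible R"
  shows "sym_matrix (matrix_inv R)"
proof -
  have "R ** transpose (matrix_inv R) = transpose (matrix_inv R ** R)"
    using assms(1) by (simp add: matrix_transpose_mul sym_matrix_def)
  also have "\<dots> = mat 1" using inv_mat(2)[OF assms(2)] by simp
  finally have "matrix_inv R = transpose (matrix_inv R)" by (rule inv_unique(2))
  thus ?thesis unfolding sym_matrix_def by simp
qed

lemma pd_nonneg:
  fixes A :: "real^'n^'n"
  assumes "pos_def A" shows "x \<bullet> (A *v x) \<ge> 0"
  using assms unfolding pos_def_def by (cases "x = 0") (auto intro: less_imp_le)

lemma cong_pd:
  fixes Z P :: "real^'n^'n"
  assumes Z: "pos_def Z" and P: "sym_matrix P" "invertible P"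
  shows "pos_def (P ** Z ** P)"
proof -
  have sZ: "sym_matrix Z" using Z by (simp add: pos_def_def)
  have e: "(P ** Z ** P) *v x = P *v (Z *v (P *v x))" for x
    by (simp add: matrix_vector_mul_assoc[symmetric])
  have s: "sym_matrix (P ** Z ** P)"
  proof (rule sym_matrixI)
    fix x y
    have "x \<bullet> ((P ** Z ** P) *v y) = (P *v x) \<bullet> (Z *v (P *v y))" unfolding e by (rule sym_inner[OF P(1)])
    also have "\<dots> = (Z *v (P *v x)) \<bullet> (P *v y)" by (rule sym_inner[OF sZ])
    also have "\<dots> = (P *v (Z *v (P *v x))) \<bullet> y" by (rule sym_inner[OF P(1)])
    finally show "x \<bullet> ((P ** Z ** P) *v y) = ((P ** Z ** P) *v x) \<bullet> y" unfolding e .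
  qed
  have "x \<bullet> ((P ** Z ** P) *v x) > 0" if x: "x \<noteq> 0" for x
  proof -
    have "matrix_inv P *v (P *v x) = x"
      using inv_mat(2)[OF P(2)] by (simp add: matrix_vector_mul_assoc)
    hence "P *v x \<noteq> 0" using x by auto
    hence "(P *v x) \<bullet> (Z *v (P *v x)) > 0" using Z unfolding pos_def_def by blast
    thus ?thesis unfolding e sym_inner[OF P(1)] .
  qed
  thus ?thesis using s unfolding pos_def_def by blast
qed

lemma rv_aux:
  fixes a b Z I :: "'a::real_vector"
  assumes "a + c *\<^sub>R Z + c *\<^sub>R Z + d *\<^sub>R I = b + d *\<^sub>R I"
  shows "a = b - (2 * c) *\<^sub>R Z"
proof -
  have "a = b - (c *\<^sub>R Z + c *\<^sub>R Z)" using assms by (simp add: algebra_simps)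
  also have "c *\<^sub>R Z + c *\<^sub>R Z = (2 * c) *\<^sub>R Z" by (simp add: scaleR_left_distrib[symmetric])
  finally show ?thesis .
qed

lemma main_part:
  fixes S1 S2 :: "real^'d^'d" and \<epsilon> :: real
  assumes S1: "pos_def S1" and S2: "pos_def S2" and eps: "\<epsilon> > 0"
  defines "R \<equiv> mat_sqrt S1"
  defines "M \<equiv> R ** S2 ** R + (\<epsilon>/4)\<^sup>2 *\<^sub>R mat 1"
  defines "T \<equiv> mat_sqrt M"
  defines "Xe \<equiv> matrix_inv R ** T ** matrix_inv R - (\<epsilon>/4) *\<^sub>R matrix_inv S1"
  shows "(\<exists>!X. pos_def X \<and> X ** S1 ** X + (\<epsilon>/2) *\<^sub>R X = S2)
            \<and> pos_def Xe \<and> Xe ** S1 ** Xe + (\<epsilon>/2) *\<^sub>R Xe = S2"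
proof -
  define c where "c = \<epsilon>/4"
  have c: "c > 0" using eps by (simp add: c_def)
  have pR: "pos_def R" and RR: "R ** R = S1" unfolding R_def using mat_sqrt[OF S1] by auto
  have sR: "sym_matrix R" using pR by (simp add: pos_def_def)
  have sS2: "sym_matrix S2" using S2 by (simp add: pos_def_def)
  have invR: "invertible R" by (rule pos_def_invertible[OF pR])
  define Ri where "Ri = matrix_inv R"
  have RRi: "R ** Ri = mat 1" and RiR: "Ri ** R = mat 1" unfolding Ri_def using inv_mat[OF invR] by auto
  have c1: "A ** R ** Ri = A" for A by (metis RRi matrix_mul_assoc matrix_mul_rid)
  have c2: "A ** Ri ** R = A" for A by (metis RiR matrix_mul_assoc matrix_mul_rid)
  have invRi: "invertible Ri" using inv_unique(1)[OF RiR] .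
  have sRi: "sym_matrix Ri" unfolding Ri_def by (rule sym_inv[OF sR invR])
  have S1inv: "matrix_inv S1 = Ri ** Ri"
    by (rule inv_unique(2)) (simp add: RR[symmetric] matrix_mul_assoc c1 RRi)
  have Mv: "M *v x = R *v (S2 *v (R *v x)) + c^2 *\<^sub>R x" for x
    unfolding M_def c_def by (simp add: matrix_vector_mult_add_rdistrib matrix_vector_mul_assoc[symmetric]
      scaleR_matrix_vector_assoc[symmetric])
  have qM: "x \<bullet> (M *v x) = (R *v x) \<bullet> (S2 *v (R *v x)) + c^2 * (x \<bullet> x)" for x
    unfolding Mv by (simp add: inner_add_right sym_inner[OF sR])
  have pM: "pos_def M"
  proof -
    have "sym_matrix M"
    proof (rule sym_matrixI)
      fix x y
      have "x \<bullet> (M *v y) = (R *v x) \<bullet> (S2 *v (R *v y)) + c^2 * (x \<bullet> y)"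
        unfolding Mv by (simp add: inner_add_right sym_inner[OF sR])
      also have "\<dots> = (S2 *v (R *v x)) \<bullet> (R *v y) + c^2 * (x \<bullet> y)"
        by (simp add: sym_inner[OF sS2])
      also have "\<dots> = (M *v x) \<bullet> y"
        unfolding Mv by (simp add: inner_add_left sym_inner[OF sR, symmetric])
      finally show "x \<bullet> (M *v y) = (M *v x) \<bullet> y" .
    qed
    moreover have "x \<bullet> (M *v x) > 0" if "x \<noteq> 0" for x
    proof -
      have "(R *v x) \<bullet> (S2 *v (R *v x)) \<ge> 0" by (rule pd_nonneg[OF S2])
      moreover have "c^2 * (x \<bullet> x) > 0" using that c by simp
      ultimately show ?thesis unfolding qM by linarith
    qed
    ultimately show ?thesis unfolding pos_def_def by blast
  qed
  have pT: "pos_def T" and TT: "T ** T = M" unfolding T_def using mat_sqrt[OF pM] by auto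
  have sT: "sym_matrix T" using pT by (simp add: pos_def_def)
  define Z where "Z = T - c *\<^sub>R mat 1"
  have Zv: "Z *v x = T *v x - c *\<^sub>R x" for x
    unfolding Z_def by (simp add: matrix_vector_mult_diff_rdistrib scaleR_matrix_vector_assoc[symmetric])
  have pZ: "pos_def Z"
  proof (rule eig_pos_def)
    show "sym_matrix Z"
      by (rule sym_matrixI) (simp add: Zv inner_diff_left inner_diff_right sym_inner[OF sT])
    fix v \<mu> assume v: "v \<noteq> 0" and ev: "Z *v v = \<mu> *\<^sub>R v"
    have Tv: "T *v v = (\<mu> + c) *\<^sub>R v" using ev unfolding Zv by (simp add: algebra_simps)
    have "T *v (T *v v) = ((\<mu> + c) * (\<mu> + c)) *\<^sub>R v" by (simp add: Tv matrix_vector_mult_scaleR)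
    hence "M *v v = ((\<mu> + c) * (\<mu> + c)) *\<^sub>R v" using TT by (simp add: matrix_vector_mul_assoc)
    hence e1: "v \<bullet> (M *v v) = (\<mu> + c) * (\<mu> + c) * (v \<bullet> v)" by simp
    have vv: "v \<bullet> v > 0" using v by simp
    have "R *v v \<noteq> 0"
    proof
      assume "R *v v = 0"
      hence "Ri *v (R *v v) = 0" by simp
      thus False using v RiR by (simp add: matrix_vector_mul_assoc)
    qed
    hence "(R *v v) \<bullet> (S2 *v (R *v v)) > 0" using S2 unfolding pos_def_def by blast
    hence "(\<mu> + c) * (\<mu> + c) * (v \<bullet> v) > c * c * (v \<bullet> v)" using e1 qM[of v] by (simp add: power2_eq_square)
    hence g: "(\<mu> + c) * (\<mu> + c) > c * c" using vv by simp
    have "v \<bullet> (T *v v) > 0" using pT v unfolding pos_def_def by blast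
    hence "(\<mu> + c) * (v \<bullet> v) > 0" using Tv by simp
    hence pc: "\<mu> + c > 0" using vv by (simp add: zero_less_mult_iff)
    show "\<mu> > 0"
    proof (rule ccontr)
      assume "\<not> \<mu> > 0"
      hence "\<mu> + c \<le> c" by simp
      hence "(\<mu> + c) * (\<mu> + c) \<le> c * c" using pc c by (intro mult_mono) auto
      thus False using g by simp
    qed
  qed
  have XeZ: "Xe = Ri ** Z ** Ri"
    unfolding Xe_def Z_def S1inv Ri_def[symmetric] c_def by (simp add: mm_simps)
  have pXe: "pos_def Xe" unfolding XeZ by (rule cong_pd[OF pZ sRi invRi])
  have ZZ: "Z ** Z = R ** S2 ** R - (2 * c) *\<^sub>R Z"
  proof (rule rv_aux)
    have TZ: "T = Z + c *\<^sub>R mat 1" unfolding Z_def by simp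
    have "Z ** Z + c *\<^sub>R Z + c *\<^sub>R Z + (c * c) *\<^sub>R mat 1 = (Z + c *\<^sub>R mat 1) ** (Z + c *\<^sub>R mat 1)"
      by (simp only: mm_add_r matrix_add_ldistrib mm_scale_l mm_scale_r matrix_mul_lid matrix_mul_rid
          scaleR_scaleR scaleR_add_right add.assoc)
    also have "\<dots> = T ** T" by (simp only: TZ)
    also have "\<dots> = R ** S2 ** R + (c * c) *\<^sub>R mat 1" unfolding TT M_def c_def
      by (simp add: power2_eq_square)
    finally show "Z ** Z + c *\<^sub>R Z + c *\<^sub>R Z + (c * c) *\<^sub>R mat 1 = R ** S2 ** R + (c * c) *\<^sub>R mat 1" .
  qed
  have ZZ': "A ** Z ** Z = A ** R ** S2 ** R - (2 * c) *\<^sub>R (A ** Z)" for A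
    by (metis ZZ matrix_mul_assoc mm_diff_l mm_scale_r)
  have eqXe: "Xe ** S1 ** Xe + (\<epsilon>/2) *\<^sub>R Xe = S2"
  proof -
    have "Xe ** S1 ** Xe = Ri ** Z ** Ri ** R ** R ** Ri ** Z ** Ri"
      unfolding XeZ RR[symmetric] by (simp add: matrix_mul_assoc)
    also have "\<dots> = Ri ** Z ** Z ** Ri" by (simp add: c1 c2)
    also have "\<dots> = S2 - (2 * c) *\<^sub>R Xe"
      unfolding ZZ' XeZ by (simp add: mm_simps RiR c1)
    finally show ?thesis by (simp add: c_def)
  qed
  have uniq: "X = Xe" if pX: "pos_def X" and hX: "X ** S1 ** X + (\<epsilon>/2) *\<^sub>R X = S2" for X
  proof -
    define Y where "Y = R ** X ** R"
    have pY: "pos_def Y" unfolding Y_def by (rule cong_pd[OF pX sR invR])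
    have sY: "sym_matrix Y" using pY by (simp add: pos_def_def)
    define W where "W = Y + c *\<^sub>R mat 1"
    have Wv: "W *v x = Y *v x + c *\<^sub>R x" for x
      unfolding W_def by (simp add: matrix_vector_mult_add_rdistrib scaleR_matrix_vector_assoc[symmetric])
    have pW: "pos_def W"
    proof -
      have "sym_matrix W"
        by (rule sym_matrixI) (simp add: Wv inner_add_left inner_add_right sym_inner[OF sY])
      moreover have "x \<bullet> (W *v x) > 0" if "x \<noteq> 0" for x
      proof -
        have "x \<bullet> (Y *v x) > 0" using pY that unfolding pos_def_def by blast
        moreover have "c * (x \<bullet> x) > 0" using that c by simp
        ultimately show ?thesis unfolding Wv by (simp add: inner_add_right)
      qed
      ultimately show ?thesis unfolding pos_def_def by blast
    qed
    have hX': "X ** R ** R ** X = S2 - (\<epsilon>/2) *\<^sub>R X"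
      using hX unfolding RR[symmetric] by (simp add: matrix_mul_assoc algebra_simps)
    have hX'': "A ** X ** R ** R ** X = A ** S2 - (\<epsilon>/2) *\<^sub>R (A ** X)" for A
      by (metis hX' matrix_mul_assoc mm_diff_l mm_scale_r)
    have "W ** W = M"
    proof -
      have "W ** W = Y ** Y + (c *\<^sub>R Y + (c *\<^sub>R Y + (c * c) *\<^sub>R mat 1))"
        unfolding W_def
        by (simp only: mm_add_r matrix_add_ldistrib mm_scale_l mm_scale_r matrix_mul_lid matrix_mul_rid
          scaleR_scaleR scaleR_add_right add.assoc)
      also have "Y ** Y = R ** S2 ** R - (2 * c) *\<^sub>R Y"
      proof -
        have "Y ** Y = R ** X ** R ** R ** X ** R" unfolding Y_def by (simp add: matrix_mul_assoc)
        also have "\<dots> = R ** S2 ** R - (\<epsilon>/2) *\<^sub>R (R ** X ** R)"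
          unfolding hX'' by (simp add: mm_simps)
        finally show ?thesis unfolding Y_def c_def by simp
      qed
      also have "(R ** S2 ** R - (2 * c) *\<^sub>R Y) + (c *\<^sub>R Y + (c *\<^sub>R Y + (c * c) *\<^sub>R mat 1))
          = R ** S2 ** R + (c * c) *\<^sub>R mat 1"
      proof -
        have "(2 * c) *\<^sub>R Y = c *\<^sub>R Y + c *\<^sub>R Y" by (simp add: scaleR_left_distrib[symmetric])
        thus ?thesis by (simp add: algebra_simps)
      qed
      also have "\<dots> = M" unfolding M_def c_def by (simp add: power2_eq_square)
      finally show ?thesis .
    qed
    hence "T = W" unfolding T_def by (rule mat_sqrt_unique[OF pM pW])
    hence YZ: "Y = Z" unfolding W_def Z_def by simp
    have "X = Ri ** Y ** Ri" unfolding Y_def by (simp add: matrix_mul_assoc RiR c1)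
    thus "X = Xe" unfolding YZ XeZ .
  qed
  show ?thesis using uniq eqXe pXe by blast
qed


lemma block_part:
  fixes S1 S2 Xe :: "real^'d^'d" and \<epsilon> :: real
  assumes S1: "pos_def S1" and S2: "pos_def S2" and eps: "\<epsilon> > 0"
    and pXe: "pos_def Xe" and eqXe: "Xe ** S1 ** Xe + (\<epsilon>/2) *\<^sub>R Xe = S2"
  shows "pos_def (block_mat S1 (S1 ** Xe) (Xe ** S1) S2) \<and> invertible (block_mat S1 (S1 ** Xe) (Xe ** S1) S2)
            \<and> matrix_inv (block_mat S1 (S1 ** Xe) (Xe ** S1) S2) =
                block_mat (matrix_inv S1 + (2/\<epsilon>) *\<^sub>R Xe) (- (2/\<epsilon>) *\<^sub>R mat 1)
                          (- (2/\<epsilon>) *\<^sub>R mat 1) ((2/\<epsilon>) *\<^sub>R matrix_inv Xe)"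
proof -
  define Se where "Se = block_mat S1 (S1 ** Xe) (Xe ** S1) S2"
  have sS1: "sym_matrix S1" and sS2: "sym_matrix S2" and sXe: "sym_matrix Xe"
    using S1 S2 pXe by (auto simp: pos_def_def)
  have sSe: "sym_matrix Se"
    using sS1 sS2 sXe unfolding Se_def sym_matrix_def by (simp add: block_transpose matrix_transpose_mul)
  have S2v: "S2 *v y = Xe *v (S1 *v (Xe *v y)) + (\<epsilon>/2) *\<^sub>R (Xe *v y)" for y
    unfolding eqXe[symmetric]
    by (simp add: matrix_vector_mult_add_rdistrib matrix_vector_mul_assoc[symmetric]
        scaleR_matrix_vector_assoc[symmetric])
  have q: "z \<bullet> (Se *v z) = (blk_l z + Xe *v blk_r z) \<bullet> (S1 *v (blk_l z + Xe *v blk_r z))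
             + (\<epsilon>/2) * (blk_r z \<bullet> (Xe *v blk_r z))" for z
  proof -
    define x where "x = blk_l z"
    define y where "y = blk_r z"
    have "z \<bullet> (Se *v z) = x \<bullet> (S1 *v x + S1 *v (Xe *v y)) + y \<bullet> (Xe *v (S1 *v x) + S2 *v y)"
      unfolding Se_def x_def y_def blk_inner[of z] blk_mv_l blk_mv_r
      by (simp add: matrix_vector_mul_assoc[symmetric])
    also have "\<dots> = (x + Xe *v y) \<bullet> (S1 *v (x + Xe *v y)) + (\<epsilon>/2) * (y \<bullet> (Xe *v y))"
    proof -
      have a: "y \<bullet> (Xe *v (S1 *v x)) = (Xe *v y) \<bullet> (S1 *v x)" by (rule sym_inner[OF sXe])
      have b: "y \<bullet> (Xe *v (S1 *v (Xe *v y))) = (Xe *v y) \<bullet> (S1 *v (Xe *v y))" by (rule sym_inner[OF sXe])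
      have d: "x \<bullet> (S1 *v (Xe *v y)) = (S1 *v x) \<bullet> (Xe *v y)" by (rule sym_inner[OF sS1])
      show ?thesis unfolding S2v
        by (simp add: inner_add_left inner_add_right matrix_vector_right_distrib a b d inner_commute)
    qed
    finally show ?thesis unfolding x_def y_def .
  qed
  have pSe: "pos_def Se"
  proof -
    have "z \<bullet> (Se *v z) > 0" if z: "z \<noteq> 0" for z
    proof (cases "blk_r z = 0")
      case True
      hence "blk_l z \<noteq> 0" using z blk_zero by blast
      hence "blk_l z \<bullet> (S1 *v blk_l z) > 0" using S1 unfolding pos_def_def by blast
      thus ?thesis unfolding q True by simp
    next
      case False
      hence "blk_r z \<bullet> (Xe *v blk_r z) > 0" using pXe unfolding pos_def_def by blast
      hence "(\<epsilon>/2) * (blk_r z \<bullet> (Xe *v blk_r z)) > 0" using eps by simp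
      moreover have "(blk_l z + Xe *v blk_r z) \<bullet> (S1 *v (blk_l z + Xe *v blk_r z)) \<ge> 0"
        by (rule pd_nonneg[OF S1])
      ultimately show ?thesis unfolding q by linarith
    qed
    thus ?thesis using sSe unfolding pos_def_def by blast
  qed
  define k where "k = 2/\<epsilon>"
  have k: "k * (\<epsilon>/2) = 1" unfolding k_def using eps by simp
  have invS1: "invertible S1" by (rule pos_def_invertible[OF S1])
  have invXe: "invertible Xe" by (rule pos_def_invertible[OF pXe])
  define S1i where "S1i = matrix_inv S1"
  define Xi where "Xi = matrix_inv Xe"
  have S1S1i: "S1 ** S1i = mat 1" unfolding S1i_def by (rule inv_mat(1)[OF invS1])
  have XXi: "Xe ** Xi = mat 1" unfolding Xi_def by (rule inv_mat(1)[OF invXe])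
  have d1: "A ** S1 ** S1i = A" for A by (metis S1S1i matrix_mul_assoc matrix_mul_rid)
  have d2: "A ** Xe ** Xi = A" for A by (metis XXi matrix_mul_assoc matrix_mul_rid)
  have XSX: "Xe ** S1 ** Xe = S2 - (\<epsilon>/2) *\<^sub>R Xe" using eqXe by (simp add: algebra_simps)
  have S2Xi: "S2 ** Xi = Xe ** S1 + (\<epsilon>/2) *\<^sub>R mat 1"
    unfolding eqXe[symmetric] by (simp add: mm_simps d2 XXi)
  have TL: "S1 ** (S1i + k *\<^sub>R Xe) + S1 ** Xe ** (- k *\<^sub>R mat 1) = mat 1"
    by (simp add: mm_simps S1S1i)
  have TR: "S1 ** (- k *\<^sub>R mat 1) + S1 ** Xe ** (k *\<^sub>R Xi) = 0"
    by (simp add: mm_simps d2)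
  have BL: "Xe ** S1 ** (S1i + k *\<^sub>R Xe) + S2 ** (- k *\<^sub>R mat 1) = 0"
  proof -
    have "Xe ** S1 ** (S1i + k *\<^sub>R Xe) + S2 ** (- k *\<^sub>R mat 1) = Xe + k *\<^sub>R (S2 - (\<epsilon>/2) *\<^sub>R Xe) - k *\<^sub>R S2"
      unfolding XSX[symmetric] by (simp add: mm_simps d1)
    also have "\<dots> = (1 - k * (\<epsilon>/2)) *\<^sub>R Xe" by (simp add: algebra_simps)
    finally show ?thesis using k by simp
  qed
  have BR: "Xe ** S1 ** (- k *\<^sub>R mat 1) + S2 ** (k *\<^sub>R Xi) = mat 1"
  proof -
    have "Xe ** S1 ** (- k *\<^sub>R mat 1) + S2 ** (k *\<^sub>R Xi) = (k * (\<epsilon>/2)) *\<^sub>R mat 1"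
      by (simp add: mm_scale_r mm_neg_r matrix_mul_rid S2Xi algebra_simps)
    thus ?thesis using k by simp
  qed
  have prod: "Se ** block_mat (S1i + k *\<^sub>R Xe) (- k *\<^sub>R mat 1) (- k *\<^sub>R mat 1) (k *\<^sub>R Xi) = mat 1"
    unfolding Se_def block_mult TL TR BL BR block_id[symmetric] by simp
  have "- (2/\<epsilon>) *\<^sub>R (mat 1 :: real^'d^'d) = - k *\<^sub>R mat 1" unfolding k_def by simp
  thus ?thesis using pSe inv_unique[OF prod] unfolding Se_def S1i_def Xi_def k_def by simp
qed

theorem proposition1:
  fixes S1 S2 :: "real^'d^'d" and \<epsilon> :: real
  assumes "pos_def S1" and "pos_def S2" and "\<epsilon> > 0"
  shows "let Xe = matrix_inv (mat_sqrt S1)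
                   ** mat_sqrt (mat_sqrt S1 ** S2 ** mat_sqrt S1 + (\<epsilon>/4)\<^sup>2 *\<^sub>R mat 1)
                   ** matrix_inv (mat_sqrt S1)
                 - (\<epsilon>/4) *\<^sub>R matrix_inv S1;
             Se = block_mat S1 (S1 ** Xe) (Xe ** S1) S2
         in (\<exists>!X. pos_def X \<and> X ** S1 ** X + (\<epsilon>/2) *\<^sub>R X = S2)
            \<and> pos_def Xe \<and> Xe ** S1 ** Xe + (\<epsilon>/2) *\<^sub>R Xe = S2
            \<and> pos_def Se \<and> invertible Se
            \<and> matrix_inv Se =
                block_mat (matrix_inv S1 + (2/\<epsilon>) *\<^sub>R Xe) (- (2/\<epsilon>) *\<^sub>R mat 1)
                          (- (2/\<epsilon>) *\<^sub>R mat 1) ((2/\<epsilon>) *\<^sub>R matrix_inv Xe)"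
proof -
  have m: "(\<exists>!X. pos_def X \<and> X ** S1 ** X + (\<epsilon>/2) *\<^sub>R X = S2)
     \<and> pos_def (matrix_inv (mat_sqrt S1)
                   ** mat_sqrt (mat_sqrt S1 ** S2 ** mat_sqrt S1 + (\<epsilon>/4)\<^sup>2 *\<^sub>R mat 1)
                   ** matrix_inv (mat_sqrt S1)
                 - (\<epsilon>/4) *\<^sub>R matrix_inv S1)
     \<and> (matrix_inv (mat_sqrt S1)
                   ** mat_sqrt (mat_sqrt S1 ** S2 ** mat_sqrt S1 + (\<epsilon>/4)\<^sup>2 *\<^sub>R mat 1)
                   ** matrix_inv (mat_sqrt S1)
                 - (\<epsilon>/4) *\<^sub>R matrix_inv S1) ** S1 ** (matrix_inv (mat_sqrt S1)
                   ** mat_sqrt (mat_sqrt S1 ** S2 ** mat_sqrt S1 + (\<epsilon>/4)\<^sup>2 *\<^sub>R mat 1)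
                   ** matrix_inv (mat_sqrt S1)
                 - (\<epsilon>/4) *\<^sub>R matrix_inv S1) + (\<epsilon>/2) *\<^sub>R (matrix_inv (mat_sqrt S1)
                   ** mat_sqrt (mat_sqrt S1 ** S2 ** mat_sqrt S1 + (\<epsilon>/4)\<^sup>2 *\<^sub>R mat 1)
                   ** matrix_inv (mat_sqrt S1)
                 - (\<epsilon>/4) *\<^sub>R matrix_inv S1) = S2"
    by (rule main_part[OF assms])
  show ?thesis
    unfolding Let_def using m block_part[OF assms] by blast
qed

end
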